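(* Let $\delta_W,\delta_X,\delta_Y,\delta_Z\in\mathbb{Z}$ with $\delta_W+\delta_X+\delta_Y+\delta_Z\ne 0$, and let $\ell=\max(|\delta_W|,|\delta_X|,|\delta_Y|,|\delta_Z|)$. Consider four tests $A,B,C,D$ (rows, in this order) and four persons $W,X,Y,Z$ (columns) and the $4\times 4$ schedule matrix $S$ defined as follows. Each person occupies exactly two tests: $X$ is in $A$ and $B$, $Y$ is in $B$ and $C$, $Z$ is in $C$ and $D$, $W$ is in $D$ and $A$; all other entries are $\infty$. For a person $P$ occupying the ordered pair of tests $(U,V)\in\{(A,B),(B,C),(C,D),(D,A)\}$ (for $P=X,Y,Z,W$ respectively), set $S_{U,P}=\max(0,-\delta_P)$ and $S_{V,P}=\max(0,\delta_P)$ (so that $S_{V,P}-S_{U,P}=\delta_P$). Then $S$ is a $(4,4,2)$-tropical code within maximum delay $\ell$.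
   Context: Tropical arithmetic on $\mathbb{R}\cup\{\infty\}$: $x\oplus y=\min(x,y)$, $x\odot y=x+y$, with $x\oplus\infty=x$ and $x\odot\infty=\infty$. For a matrix $S$ with $T$ rows and $N$ columns and a column vector $\mathbf{x}$ of length $N$, $S\odot\mathbf{x}$ is the vector whose $t$-th entry is $\min_{j}(S_{tj}+x_j)$. A $(T,N,D)$-tropical code is a matrix $S\in(\{0\}\cup\mathbb{N}\cup\{\infty\})^{T\times N}$ such that for any two distinct vectors $\mathbf{x},\mathbf{y}\in(\{0\}\cup\mathbb{N}\cup\{\infty\})^{N}$, each having at most $D$ finite entries, $S\odot\mathbf{x}\ne S\odot\mathbf{y}$. It is within maximum delay $\ell$ if $S\in\{0,1,\dots,\ell,\infty\}^{T\times N}$. *)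

theory Defs
  imports Main "HOL-Library.Extended_Nat"
begin

text \<open>Tropical arithmetic on {0} \<union> \<nat> \<union> {\<infinity>}, modelled by enat:
  tropical sum = min, tropical product = +, with \<infinity> absorbing for + and neutral for min.
  Matrices with T rows and N columns are functions nat \<Rightarrow> nat \<Rightarrow> enat, only the
  entries with row < T and column < N being relevant; vectors of length N are
  functions nat \<Rightarrow> enat, only entries j < N being relevant.\<close>

definition trop_mv :: "nat \<Rightarrow> (nat \<Rightarrow> nat \<Rightarrow> enat) \<Rightarrow> (nat \<Rightarrow> enat) \<Rightarrow> nat \<Rightarrow> enat" where
  "trop_mv N S x t = (INF j\<in>{..<N}. S t j + x j)"

definition finite_support_count :: "nat \<Rightarrow> (nat \<Rightarrow> enat) \<Rightarrow> nat" where
  "finite_support_count N x = card {j \<in> {..<N}. x j \<noteq> \<infinity>}"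

definition tropical_code :: "nat \<Rightarrow> nat \<Rightarrow> nat \<Rightarrow> (nat \<Rightarrow> nat \<Rightarrow> enat) \<Rightarrow> bool" where
  "tropical_code T N D S \<longleftrightarrow>
     (\<forall>x y. finite_support_count N x \<le> D \<longrightarrow> finite_support_count N y \<le> D \<longrightarrow>
        (\<exists>j<N. x j \<noteq> y j) \<longrightarrow> (\<exists>t<T. trop_mv N S x t \<noteq> trop_mv N S y t))"

definition within_delay :: "nat \<Rightarrow> nat \<Rightarrow> nat \<Rightarrow> (nat \<Rightarrow> nat \<Rightarrow> enat) \<Rightarrow> bool" where
  "within_delay T N l S \<longleftrightarrow> (\<forall>t<T. \<forall>j<N. S t j = \<infinity> \<or> S t j \<le> enat l)"

definition pospart :: "int \<Rightarrow> enat" where "pospart d = enat (nat (max 0 d))"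
definition negpart :: "int \<Rightarrow> enat" where "negpart d = enat (nat (max 0 (- d)))"

text \<open>Rows: A=0, B=1, C=2, D=3.  Columns: W=0, X=1, Y=2, Z=3.
  X occupies (A,B), Y occupies (B,C), Z occupies (C,D), W occupies (D,A).\<close>
definition sched :: "int \<Rightarrow> int \<Rightarrow> int \<Rightarrow> int \<Rightarrow> nat \<Rightarrow> nat \<Rightarrow> enat" where
  "sched dW dX dY dZ t j =
    (if j = 1 \<and> t = 0 then negpart dX else if j = 1 \<and> t = 1 then pospart dX
     else if j = 2 \<and> t = 1 then negpart dY else if j = 2 \<and> t = 2 then pospart dY
     else if j = 3 \<and> t = 2 then negpart dZ else if j = 3 \<and> t = 3 then pospart dZ
     else if j = 0 \<and> t = 3 then negpart dW else if j = 0 \<and> t = 0 then pospart dW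
     else \<infinity>)"

end

theory Submission
  imports Defs
begin

lemma trop4: "trop_mv 4 S x t = min (S t 0 + x 0) (min (S t 1 + x 1) (min (S t 2 + x 2) (S t 3 + x 3)))"
proof -
  have "{..<4::nat} = {0,1,2,3}" by auto
  then show ?thesis unfolding trop_mv_def by (simp add: inf_min)
qed

lemma supp3:
  assumes "finite_support_count 4 x \<le> 2" "i < 4" "j < 4" "k < 4" "i \<noteq> j" "j \<noteq> k" "i \<noteq> k"
  shows "x i = \<infinity> \<or> x j = \<infinity> \<or> x k = \<infinity>"
proof (rule ccontr)
  assume "\<not> ?thesis"
  then have "{i,j,k} \<subseteq> {j \<in> {..<4}. x j \<noteq> \<infinity>}" using assms by auto
  then have "card {i,j,k} \<le> card {j \<in> {..<4::nat}. x j \<noteq> \<infinity>}" by (intro card_mono) auto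
  moreover have "card {i,j,k} = 3" using assms by auto
  ultimately show False using assms(1) unfolding finite_support_count_def by simp
qed

lemma core:
  fixes aW bW aX bX aY bY aZ bZ :: nat and x0 x1 x2 x3 y0 y1 y2 y3 :: enat
  assumes sum: "(int bW - int aW) + (int bX - int aX) + (int bY - int aY) + (int bZ - int aZ) \<noteq> 0"
  and hx: "x0 = \<infinity> \<or> x1 = \<infinity> \<or> x2 = \<infinity>" "x0 = \<infinity> \<or> x1 = \<infinity> \<or> x3 = \<infinity>"
          "x0 = \<infinity> \<or> x2 = \<infinity> \<or> x3 = \<infinity>" "x1 = \<infinity> \<or> x2 = \<infinity> \<or> x3 = \<infinity>"
  and hy: "y0 = \<infinity> \<or> y1 = \<infinity> \<or> y2 = \<infinity>" "y0 = \<infinity> \<or> y1 = \<infinity> \<or> y3 = \<infinity>"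
          "y0 = \<infinity> \<or> y2 = \<infinity> \<or> y3 = \<infinity>" "y1 = \<infinity> \<or> y2 = \<infinity> \<or> y3 = \<infinity>"
  and eA: "min (enat bW + x0) (enat aX + x1) = min (enat bW + y0) (enat aX + y1)"
  and eB: "min (enat bX + x1) (enat aY + x2) = min (enat bX + y1) (enat aY + y2)"
  and eC: "min (enat bY + x2) (enat aZ + x3) = min (enat bY + y2) (enat aZ + y3)"
  and eD: "min (enat aW + x0) (enat bZ + x3) = min (enat aW + y0) (enat bZ + y3)"
  shows "x0 = y0 \<and> x1 = y1 \<and> x2 = y2 \<and> x3 = y3"
  using assms
  apply (cases x0; cases x1; cases x2; cases x3; cases y0; cases y1; cases y2; cases y3)
     apply (simp_all add: min_def split: if_splits)

  done

lemma outs: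
  fixes dW dX dY dZ :: int
  defines "aW \<equiv> nat (max 0 (- dW))" and "bW \<equiv> nat (max 0 dW)"
  and "aX \<equiv> nat (max 0 (- dX))" and "bX \<equiv> nat (max 0 dX)"
  and "aY \<equiv> nat (max 0 (- dY))" and "bY \<equiv> nat (max 0 dY)"
  and "aZ \<equiv> nat (max 0 (- dZ))" and "bZ \<equiv> nat (max 0 dZ)"
  shows "trop_mv 4 (sched dW dX dY dZ) x 0 = min (enat bW + x 0) (enat aX + x 1)"
    "trop_mv 4 (sched dW dX dY dZ) x 1 = min (enat bX + x 1) (enat aY + x 2)"
    "trop_mv 4 (sched dW dX dY dZ) x 2 = min (enat bY + x 2) (enat aZ + x 3)"
    "trop_mv 4 (sched dW dX dY dZ) x 3 = min (enat aW + x 0) (enat bZ + x 3)"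
  unfolding trop4 sched_def pospart_def negpart_def assms
  by (simp_all add: min.commute min.left_commute min.assoc)

lemma delay:
  "within_delay 4 4 (nat (max (max \<bar>dW\<bar> \<bar>dX\<bar>) (max \<bar>dY\<bar> \<bar>dZ\<bar>))) (sched dW dX dY dZ)"
proof -
  define L where "L = nat (max (max \<bar>dW\<bar> \<bar>dX\<bar>) (max \<bar>dY\<bar> \<bar>dZ\<bar>))"
  have h: "pospart d \<le> enat L \<and> negpart d \<le> enat L" if "d \<in> {dW,dX,dY,dZ}" for d
    using that unfolding pospart_def negpart_def L_def by (auto intro!: nat_mono)
  have "sched dW dX dY dZ t j = \<infinity> \<or> sched dW dX dY dZ t j \<le> enat L" for t j
    unfolding sched_def using h by simp
  then show ?thesis unfolding within_delay_def L_def by blast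
qed

lemma dd: "int (nat (max 0 d)) - int (nat (max 0 (- d))) = d" by linarith

theorem mainTheorem4:
  fixes dW dX dY dZ :: int
  assumes "dW + dX + dY + dZ \<noteq> 0"
  shows "tropical_code 4 4 2 (sched dW dX dY dZ) \<and>
         within_delay 4 4 (nat (max (max \<bar>dW\<bar> \<bar>dX\<bar>) (max \<bar>dY\<bar> \<bar>dZ\<bar>))) (sched dW dX dY dZ)"
proof
  show "tropical_code 4 4 2 (sched dW dX dY dZ)"
    unfolding tropical_code_def
  proof (intro allI impI)
    fix x y :: "nat \<Rightarrow> enat"
    assume hx: "finite_support_count 4 x \<le> 2" and hy: "finite_support_count 4 y \<le> 2"
      and ne: "\<exists>j<4. x j \<noteq> y j"
    show "\<exists>t<4. trop_mv 4 (sched dW dX dY dZ) x t \<noteq> trop_mv 4 (sched dW dX dY dZ) y t"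
    proof (rule ccontr)
      assume "\<not> ?thesis"
      then have e: "\<And>t. t < 4 \<Longrightarrow> trop_mv 4 (sched dW dX dY dZ) x t = trop_mv 4 (sched dW dX dY dZ) y t"
        by auto
      have x1: "x 0 = \<infinity> \<or> x 1 = \<infinity> \<or> x 2 = \<infinity>" by (rule supp3[OF hx]) auto
      have x2: "x 0 = \<infinity> \<or> x 1 = \<infinity> \<or> x 3 = \<infinity>" by (rule supp3[OF hx]) auto
      have x3: "x 0 = \<infinity> \<or> x 2 = \<infinity> \<or> x 3 = \<infinity>" by (rule supp3[OF hx]) auto
      have x4: "x 1 = \<infinity> \<or> x 2 = \<infinity> \<or> x 3 = \<infinity>" by (rule supp3[OF hx]) auto
      have y1: "y 0 = \<infinity> \<or> y 1 = \<infinity> \<or> y 2 = \<infinity>" by (rule supp3[OF hy]) auto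
      have y2: "y 0 = \<infinity> \<or> y 1 = \<infinity> \<or> y 3 = \<infinity>" by (rule supp3[OF hy]) auto
      have y3: "y 0 = \<infinity> \<or> y 2 = \<infinity> \<or> y 3 = \<infinity>" by (rule supp3[OF hy]) auto
      have y4: "y 1 = \<infinity> \<or> y 2 = \<infinity> \<or> y 3 = \<infinity>" by (rule supp3[OF hy]) auto
      have e1: "min (enat (nat (max 0 dX)) + x 1) (enat (nat (max 0 (- dY))) + x 2) = min (enat (nat (max 0 dX)) + y 1) (enat (nat (max 0 (- dY))) + y 2)"
        using e[of 1] unfolding outs by simp
      have e2: "min (enat (nat (max 0 dY)) + x 2) (enat (nat (max 0 (- dZ))) + x 3) = min (enat (nat (max 0 dY)) + y 2) (enat (nat (max 0 (- dZ))) + y 3)"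
        using e[of 2] unfolding outs by simp
      have e3: "min (enat (nat (max 0 (- dW))) + x 0) (enat (nat (max 0 dZ)) + x 3) = min (enat (nat (max 0 (- dW))) + y 0) (enat (nat (max 0 dZ)) + y 3)"
        using e[of 3] unfolding outs by simp
      have e0: "min (enat (nat (max 0 dW)) + x 0) (enat (nat (max 0 (- dX))) + x 1) = min (enat (nat (max 0 dW)) + y 0) (enat (nat (max 0 (- dX))) + y 1)"
        using e[of 0] unfolding outs by simp
      have s: "(int (nat (max 0 dW)) - int (nat (max 0 (- dW)))) + (int (nat (max 0 dX)) - int (nat (max 0 (- dX))))
          + (int (nat (max 0 dY)) - int (nat (max 0 (- dY)))) + (int (nat (max 0 dZ)) - int (nat (max 0 (- dZ)))) \<noteq> 0"
          using assms unfolding dd by simp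
      have eq: "x 0 = y 0 \<and> x 1 = y 1 \<and> x 2 = y 2 \<and> x 3 = y 3"
        by (rule core[OF s x1 x2 x3 x4 y1 y2 y3 y4 e0 e1 e2 e3])
      from ne obtain j where "j < 4" "x j \<noteq> y j" by auto
      moreover have "j = 0 \<or> j = 1 \<or> j = 2 \<or> j = 3" using \<open>j < 4\<close> by auto
      ultimately show False using eq by auto
    qed
  qed
  show "within_delay 4 4 (nat (max (max \<bar>dW\<bar> \<bar>dX\<bar>) (max \<bar>dY\<bar> \<bar>dZ\<bar>))) (sched dW dX dY dZ)"
    by (rule delay)
qed

end
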